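(* Let $\{(\Gamma_t,\theta_t)\}_{t\in[0,\underline t)}$ solve the framed curvature flow with $\theta$-velocity $$\upsilon_\theta=-(\kappa\,\partial_s\psi_3+2\,\partial_s\kappa\,\psi_3)\kappa^{-2}\psi_1-\kappa\psi_2^{-1}\psi_3^2-(\partial_s^2\kappa-\kappa\psi_3^2)\kappa^{-2}\psi_2$$ (the flow generating a trajectory surface of constant Gaussian curvature $K=0$). Then $\int_{\Gamma_t}\psi_1\,ds$ is independent of $t\in[0,\underline t)$.
   Context: $S^1=\mathbb{R}/2\pi\mathbb{Z}$; closed curves $\Gamma_t$ parametrized by $\gamma(t,\cdot):S^1\to\mathbb{R}^3$, $g=\|\partial_u\gamma\|$, $ds=g\,du$, $\partial_s=g^{-1}\partial_u$; Frenet frame $T,N,B$, curvature $\kappa$, torsion $\tau$. For an angle function $\theta$: $\nu_\theta=\cos\theta N+\sin\theta B$, $\psi_1=\kappa\cos\theta$, $\psi_2=\kappa\sin\theta$, $\psi_3=\tau+\partial_s\theta$; the formula for $\upsilon_\theta$ presupposes $\kappa>0$ and $\psi_2\neq0$. Framed curvature flow: $\partial_t\gamma=\kappa\nu_\theta$, $\partial_t\theta=\upsilon_\theta$. *)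

theory Defs
  imports "HOL-Analysis.Analysis" "HOL-Analysis.Cross3"
begin

text \<open>A family is a function F t u of time t (ranging over an interval I, derivatives
  taken within I, i.e. one-sided at the left endpoint) and of the curve parameter u.\<close>

definition dT :: "real set \<Rightarrow> (real \<Rightarrow> real \<Rightarrow> 'a::real_normed_vector) \<Rightarrow> real \<Rightarrow> real \<Rightarrow> 'a" where
  "dT I G t u = vector_derivative (\<lambda>s. G s u) (at t within I)"

definition dUU :: "(real \<Rightarrow> real \<Rightarrow> 'a::real_normed_vector) \<Rightarrow> real \<Rightarrow> real \<Rightarrow> 'a" where
  "dUU G t u = vector_derivative (\<lambda>v. G t v) (at u)"

fun pder :: "real set \<Rightarrow> bool list \<Rightarrow> (real \<Rightarrow> real \<Rightarrow> 'a::real_normed_vector) \<Rightarrow> real \<Rightarrow> real \<Rightarrow> 'a" where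
  "pder I [] F = F"
| "pder I (True # ds) F = dT I (pder I ds F)"
| "pder I (False # ds) F = dUU (pder I ds F)"

definition smooth_tu :: "real set \<Rightarrow> (real \<Rightarrow> real \<Rightarrow> 'a::real_normed_vector) \<Rightarrow> bool" where
  "smooth_tu I F \<longleftrightarrow>
     (\<forall>ds. continuous_on (I \<times> UNIV) (\<lambda>p. pder I ds F (fst p) (snd p)) \<and>
        (\<forall>t\<in>I. \<forall>u. ((\<lambda>s. pder I ds F s u) has_vector_derivative pder I (True # ds) F t u) (at t within I)
                 \<and> ((\<lambda>v. pder I ds F t v) has_vector_derivative pder I (False # ds) F t u) (at u)))"

definition dU :: "(real \<Rightarrow> 'a::real_normed_vector) \<Rightarrow> real \<Rightarrow> 'a" where
  "dU f u = vector_derivative f (at u)"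

definition spd :: "(real \<Rightarrow> real^3) \<Rightarrow> real \<Rightarrow> real" where
  "spd c u = norm (dU c u)"

definition dS :: "(real \<Rightarrow> real^3) \<Rightarrow> (real \<Rightarrow> 'a::real_normed_vector) \<Rightarrow> real \<Rightarrow> 'a" where
  "dS c f u = (1 / spd c u) *\<^sub>R dU f u"

definition tang :: "(real \<Rightarrow> real^3) \<Rightarrow> real \<Rightarrow> real^3" where
  "tang c u = (1 / spd c u) *\<^sub>R dU c u"

definition curv :: "(real \<Rightarrow> real^3) \<Rightarrow> real \<Rightarrow> real" where
  "curv c u = norm (dS c (tang c) u)"

definition nrm :: "(real \<Rightarrow> real^3) \<Rightarrow> real \<Rightarrow> real^3" where
  "nrm c u = (1 / curv c u) *\<^sub>R dS c (tang c) u"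

definition binrm :: "(real \<Rightarrow> real^3) \<Rightarrow> real \<Rightarrow> real^3" where
  "binrm c u = cross3 (tang c u) (nrm c u)"

definition tors :: "(real \<Rightarrow> real^3) \<Rightarrow> real \<Rightarrow> real" where   \<comment> \<open>N_s = -kappa T + tau B\<close>
  "tors c u = dS c (nrm c) u \<bullet> binrm c u"

definition nu :: "(real \<Rightarrow> real^3) \<Rightarrow> (real \<Rightarrow> real) \<Rightarrow> real \<Rightarrow> real^3" where
  "nu c th u = cos (th u) *\<^sub>R nrm c u + sin (th u) *\<^sub>R binrm c u"

definition psi1 :: "(real \<Rightarrow> real^3) \<Rightarrow> (real \<Rightarrow> real) \<Rightarrow> real \<Rightarrow> real" where
  "psi1 c th u = curv c u * cos (th u)"

definition psi2 :: "(real \<Rightarrow> real^3) \<Rightarrow> (real \<Rightarrow> real) \<Rightarrow> real \<Rightarrow> real" where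
  "psi2 c th u = curv c u * sin (th u)"

definition psi3 :: "(real \<Rightarrow> real^3) \<Rightarrow> (real \<Rightarrow> real) \<Rightarrow> real \<Rightarrow> real" where
  "psi3 c th u = tors c u + dS c th u"

definition upsilon0 :: "(real \<Rightarrow> real^3) \<Rightarrow> (real \<Rightarrow> real) \<Rightarrow> real \<Rightarrow> real" where
  "upsilon0 c th u =
     - (curv c u * dS c (psi3 c th) u + 2 * dS c (curv c) u * psi3 c th u) * (curv c u) powi (-2) * psi1 c th u
     - curv c u * inverse (psi2 c th u) * (psi3 c th u)^2
     - (dS c (dS c (curv c)) u - curv c u * (psi3 c th u)^2) * (curv c u) powi (-2) * psi2 c th u"

end

theory Submission
  imports Defs
begin

definition cnd :: "real set \<Rightarrow> bool list \<Rightarrow> (real \<Rightarrow> real \<Rightarrow> 'a::real_normed_vector) \<Rightarrow> bool" where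
  "cnd I ds H \<longleftrightarrow> continuous_on (I \<times> UNIV) (\<lambda>p. pder I ds H (fst p) (snd p)) \<and>
        (\<forall>t\<in>I. \<forall>u. ((\<lambda>s. pder I ds H s u) has_vector_derivative pder I (True # ds) H t u) (at t within I)
                 \<and> ((\<lambda>v. pder I ds H t v) has_vector_derivative pder I (False # ds) H t u) (at u))"

definition lv :: "real set \<Rightarrow> nat \<Rightarrow> (real \<Rightarrow> real \<Rightarrow> 'a::real_normed_vector) \<Rightarrow> bool" where
  "lv I n H \<longleftrightarrow> (\<forall>ds. length ds \<le> n \<longrightarrow> cnd I ds H)"

lemma smooth_lv: "smooth_tu I H \<longleftrightarrow> (\<forall>n. lv I n H)"
  unfolding smooth_tu_def lv_def cnd_def by (meson le_refl)

lemma pder_snoc: "pder I (ds @ [b]) H = pder I ds (if b then dT I H else dUU H)"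
proof (induction ds)
  case (Cons a ds) then show ?case by (cases a) auto
qed auto

lemma cnd_snoc: "cnd I (ds @ [b]) H = cnd I ds (if b then dT I H else dUU H)"
  unfolding cnd_def using pder_snoc[of I ds b H] pder_snoc[of I "True # ds" b H] pder_snoc[of I "False # ds" b H]
  by simp

lemma lv_Suc: "lv I (Suc n) H \<longleftrightarrow> cnd I [] H \<and> lv I n (dT I H) \<and> lv I n (dUU H)"
proof
  assume a: "lv I (Suc n) H"
  show "cnd I [] H \<and> lv I n (dT I H) \<and> lv I n (dUU H)"
  proof (intro conjI)
    show "cnd I [] H" using a unfolding lv_def by simp
    show "lv I n (dT I H)" unfolding lv_def
    proof (intro allI impI)
      fix ds :: "bool list" assume "length ds \<le> n"
      then have "cnd I (ds @ [True]) H" using a unfolding lv_def by simp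
      then show "cnd I ds (dT I H)" by (simp add: cnd_snoc)
    qed
    show "lv I n (dUU H)" unfolding lv_def
    proof (intro allI impI)
      fix ds :: "bool list" assume "length ds \<le> n"
      then have "cnd I (ds @ [False]) H" using a unfolding lv_def by simp
      then show "cnd I ds (dUU H)" by (simp add: cnd_snoc)
    qed
  qed
next
  assume a: "cnd I [] H \<and> lv I n (dT I H) \<and> lv I n (dUU H)"
  show "lv I (Suc n) H" unfolding lv_def
  proof (intro allI impI)
    fix ds :: "bool list" assume l: "length ds \<le> Suc n"
    show "cnd I ds H"
    proof (cases ds rule: rev_exhaust)
      case Nil then show ?thesis using a by simp
    next
      case (snoc ys y)
      then show ?thesis using a l unfolding lv_def by (cases y) (auto simp: cnd_snoc)
    qed
  qed
qed

lemma lv_0: "lv I 0 H \<longleftrightarrow> cnd I [] H"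
  unfolding lv_def by auto

lemma lv_mono: "lv I n H \<Longrightarrow> m \<le> n \<Longrightarrow> lv I m H"
  unfolding lv_def by auto

lemma vd_within_cong:
  assumes "\<And>s. s \<in> I \<Longrightarrow> f s = g s" "t \<in> I"
  shows "vector_derivative f (at t within I) = vector_derivative g (at t within I)"
proof -
  have "(f has_vector_derivative D) (at t within I) \<longleftrightarrow> (g has_vector_derivative D) (at t within I)" for D
  proof
    assume "(f has_vector_derivative D) (at t within I)"
    then show "(g has_vector_derivative D) (at t within I)"
      by (rule has_vector_derivative_transform[OF assms(2), rotated]) (simp add: assms(1))
  next
    assume "(g has_vector_derivative D) (at t within I)"
    then show "(f has_vector_derivative D) (at t within I)"
      by (rule has_vector_derivative_transform[OF assms(2), rotated]) (simp add: assms(1))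
  qed
  then show ?thesis unfolding vector_derivative_def by simp
qed

lemma pder_cong:
  assumes "\<And>t u. t \<in> I \<Longrightarrow> H t u = H' t u" "t \<in> I"
  shows "pder I ds H t u = pder I ds H' t u"
  using assms(2)
proof (induction ds arbitrary: t u)
  case Nil then show ?case using assms by simp
next
  case (Cons d ds)
  show ?case
  proof (cases d)
    case True
    have "vector_derivative (\<lambda>s. pder I ds H s u) (at t within I) = vector_derivative (\<lambda>s. pder I ds H' s u) (at t within I)"
      by (rule vd_within_cong) (auto intro: Cons.IH Cons.prems)
    then show ?thesis using True by (simp add: dT_def)
  next
    case False
    have "(\<lambda>v. pder I ds H t v) = (\<lambda>v. pder I ds H' t v)"
      using Cons.IH Cons.prems by auto
    then show ?thesis using False by (simp add: dUU_def)
  qed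
qed

lemma cnd_cong:
  assumes "\<And>t u. t \<in> I \<Longrightarrow> H t u = H' t u" "cnd I ds H"
  shows "cnd I ds H'"
proof -
  have e: "\<And>ds t u. t \<in> I \<Longrightarrow> pder I ds H t u = pder I ds H' t u" using pder_cong assms(1) by metis
  have c: "continuous_on (I \<times> UNIV) (\<lambda>p. pder I ds H (fst p) (snd p))"
   and d1: "\<And>t u. t \<in> I \<Longrightarrow> ((\<lambda>s. pder I ds H s u) has_vector_derivative pder I (True # ds) H t u) (at t within I)"
   and d2: "\<And>t u. t \<in> I \<Longrightarrow> ((\<lambda>v. pder I ds H t v) has_vector_derivative pder I (False # ds) H t u) (at u)"
    using assms(2) unfolding cnd_def by blast+
  show ?thesis unfolding cnd_def
  proof (intro conjI ballI allI)
    show "continuous_on (I \<times> UNIV) (\<lambda>p. pder I ds H' (fst p) (snd p))"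
      using c by (rule continuous_on_eq) (auto simp: e)
  next
    fix t u assume t: "t \<in> I"
    show "((\<lambda>s. pder I ds H' s u) has_vector_derivative pder I (True # ds) H' t u) (at t within I)"
    proof -
      have "((\<lambda>s. pder I ds H' s u) has_vector_derivative pder I (True # ds) H t u) (at t within I)"
        by (rule has_vector_derivative_transform[OF t _ d1[OF t]]) (simp add: e)
      then show ?thesis by (simp only: e[OF t])
    qed
    show "((\<lambda>v. pder I ds H' t v) has_vector_derivative pder I (False # ds) H' t u) (at u)"
    proof -
      have fe: "(\<lambda>v. pder I ds H t v) = (\<lambda>v. pder I ds H' t v)" using e[OF t] by auto
      have ee: "pder I (False # ds) H t u = pder I (False # ds) H' t u" by (rule e[OF t])
      show ?thesis using d2[OF t, of u] unfolding fe ee .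
    qed
  qed
qed

lemma lv_cong: "(\<And>t u. t \<in> I \<Longrightarrow> H t u = H' t u) \<Longrightarrow> lv I n H \<Longrightarrow> lv I n H'"
  unfolding lv_def using cnd_cong by blast

lemma cnd0:
  "cnd I [] H \<longleftrightarrow> continuous_on (I \<times> UNIV) (\<lambda>p. H (fst p) (snd p)) \<and>
        (\<forall>t\<in>I. \<forall>u. ((\<lambda>s. H s u) has_vector_derivative dT I H t u) (at t within I)
                 \<and> ((\<lambda>v. H t v) has_vector_derivative dUU H t u) (at u))"
  unfolding cnd_def by simp

lemma bounded_bilinear_cross3: "bounded_bilinear cross3"
  using bilinear_conv_bounded_bilinear bilinear_cross by blast

locale tI =
  fixes I :: "real set"
  assumes nb: "\<And>t. t \<in> I \<Longrightarrow> at t within I \<noteq> bot"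
    and cvx: "convex I"
begin

lemma dT_eqI: "t \<in> I \<Longrightarrow> ((\<lambda>s. H s u) has_vector_derivative X) (at t within I) \<Longrightarrow> dT I H t u = X"
  unfolding dT_def by (rule vector_derivative_within[OF nb])

lemma dUU_eqI: "((\<lambda>v. H t v) has_vector_derivative X) (at u) \<Longrightarrow> dUU H t u = X"
  unfolding dUU_def by (rule vector_derivative_at)

lemma cnd0I:
  assumes c: "continuous_on (I \<times> UNIV) (\<lambda>p. H (fst p) (snd p))"
    and dt: "\<And>t u. t \<in> I \<Longrightarrow> ((\<lambda>s. H s u) has_vector_derivative Dt t u) (at t within I)"
    and du: "\<And>t u. t \<in> I \<Longrightarrow> ((\<lambda>v. H t v) has_vector_derivative Du t u) (at u)"
  shows "cnd I [] H" "\<And>t u. t \<in> I \<Longrightarrow> dT I H t u = Dt t u" "\<And>t u. t \<in> I \<Longrightarrow> dUU H t u = Du t u"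
proof -
  show e1: "\<And>t u. t \<in> I \<Longrightarrow> dT I H t u = Dt t u" using dt dT_eqI by blast
  show e2: "\<And>t u. t \<in> I \<Longrightarrow> dUU H t u = Du t u" using du dUU_eqI by blast
  show "cnd I [] H" unfolding cnd0 using c dt du e1 e2 by simp
qed

lemma lv_SucI:
  assumes c: "continuous_on (I \<times> UNIV) (\<lambda>p. H (fst p) (snd p))"
    and dt: "\<And>t u. t \<in> I \<Longrightarrow> ((\<lambda>s. H s u) has_vector_derivative Dt t u) (at t within I)"
    and du: "\<And>t u. t \<in> I \<Longrightarrow> ((\<lambda>v. H t v) has_vector_derivative Du t u) (at u)"
    and "lv I n Dt" "lv I n Du"
  shows "lv I (Suc n) H"
proof -
  note cc = cnd0I[OF c dt du]
  show ?thesis unfolding lv_Suc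
    using cc assms(4,5) lv_cong[of I Dt "dT I H"] lv_cong[of I Du "dUU H"] by metis
qed

lemma lv_0I:
  assumes c: "continuous_on (I \<times> UNIV) (\<lambda>p. H (fst p) (snd p))"
    and dt: "\<And>t u. t \<in> I \<Longrightarrow> ((\<lambda>s. H s u) has_vector_derivative Dt t u) (at t within I)"
    and du: "\<And>t u. t \<in> I \<Longrightarrow> ((\<lambda>v. H t v) has_vector_derivative Du t u) (at u)"
  shows "lv I 0 H"
  using cnd0I[OF c dt du] lv_0 by blast

lemma lvD:
  assumes "lv I n H"
  shows "continuous_on (I \<times> UNIV) (\<lambda>p. H (fst p) (snd p))"
    "\<And>t u. t \<in> I \<Longrightarrow> ((\<lambda>s. H s u) has_vector_derivative dT I H t u) (at t within I)"
    "\<And>t u. t \<in> I \<Longrightarrow> ((\<lambda>v. H t v) has_vector_derivative dUU H t u) (at u)"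
  using lv_mono[OF assms, of 0] unfolding lv_0 cnd0 by auto

lemma lv_SucD: assumes "lv I (Suc n) H" shows "lv I n (dT I H)" "lv I n (dUU H)" "lv I n H"
  using assms lv_Suc lv_mono le_SucI by blast+

lemma lv_const: "lv I n (\<lambda>t u. c)"
proof (induction n arbitrary: c)
  case 0
  show ?case by (rule lv_0I[where Dt="\<lambda>t u. 0" and Du="\<lambda>t u. 0"]) (auto intro: derivative_eq_intros)
next
  case (Suc n)
  show ?case by (rule lv_SucI[where Dt="\<lambda>t u. 0" and Du="\<lambda>t u. 0"]) (auto intro: derivative_eq_intros Suc)
qed

lemma lv_add: "lv I n F \<Longrightarrow> lv I n G \<Longrightarrow> lv I n (\<lambda>t u. F t u + G t u)"
proof (induction n arbitrary: F G)
  case 0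
  show ?case
    by (rule lv_0I[where Dt="\<lambda>t u. dT I F t u + dT I G t u" and Du="\<lambda>t u. dUU F t u + dUU G t u"])
       (auto intro!: derivative_eq_intros continuous_intros lvD[OF 0(1)] lvD[OF 0(2)])
next
  case (Suc n)
  note f = lv_SucD[OF Suc.prems(1)] and g = lv_SucD[OF Suc.prems(2)]
  show ?case
    by (rule lv_SucI[where Dt="\<lambda>t u. dT I F t u + dT I G t u" and Du="\<lambda>t u. dUU F t u + dUU G t u"])
       (auto intro!: derivative_eq_intros continuous_intros lvD[OF Suc.prems(1)] lvD[OF Suc.prems(2)] Suc.IH f g)
qed

lemma lv_bilinear:
  fixes prod :: "'a::real_normed_vector \<Rightarrow> 'b::real_normed_vector \<Rightarrow> 'c::real_normed_vector"
  assumes bb: "bounded_bilinear prod"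
  shows "lv I n F \<Longrightarrow> lv I n G \<Longrightarrow> lv I n (\<lambda>t u. prod (F t u) (G t u))"
proof (induction n arbitrary: F G)
  case 0
  show ?case
    by (rule lv_0I[where Dt="\<lambda>t u. prod (F t u) (dT I G t u) + prod (dT I F t u) (G t u)"
          and Du="\<lambda>t u. prod (F t u) (dUU G t u) + prod (dUU F t u) (G t u)"])
       (auto intro!: bounded_bilinear.has_vector_derivative[OF bb] bounded_bilinear.continuous_on[OF bb]
          lvD[OF 0(1)] lvD[OF 0(2)])
next
  case (Suc n)
  note f = lv_SucD[OF Suc.prems(1)] and g = lv_SucD[OF Suc.prems(2)]
  show ?case
    by (rule lv_SucI[where Dt="\<lambda>t u. prod (F t u) (dT I G t u) + prod (dT I F t u) (G t u)"
          and Du="\<lambda>t u. prod (F t u) (dUU G t u) + prod (dUU F t u) (G t u)"])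
       (auto intro!: bounded_bilinear.has_vector_derivative[OF bb] bounded_bilinear.continuous_on[OF bb]
          lvD[OF Suc.prems(1)] lvD[OF Suc.prems(2)] Suc.IH f g lv_add)
qed

lemmas lv_mult = lv_bilinear[OF bounded_bilinear_mult]
lemmas lv_scaleR = lv_bilinear[OF bounded_bilinear_scaleR]
lemmas lv_inner = lv_bilinear[OF bounded_bilinear_inner]
lemmas lv_cross = lv_bilinear[OF bounded_bilinear_cross3]

lemma lv_uminus: "lv I n F \<Longrightarrow> lv I n (\<lambda>t u. - F t u)"
proof (induction n arbitrary: F)
  case 0
  show ?case
    by (rule lv_0I[where Dt="\<lambda>t u. - dT I F t u" and Du="\<lambda>t u. - dUU F t u"])
       (auto intro!: derivative_eq_intros continuous_intros lvD[OF 0(1)])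
next
  case (Suc n)
  note f = lv_SucD[OF Suc.prems(1)]
  show ?case
    by (rule lv_SucI[where Dt="\<lambda>t u. - dT I F t u" and Du="\<lambda>t u. - dUU F t u"])
       (auto intro!: derivative_eq_intros continuous_intros lvD[OF Suc.prems(1)] Suc.IH f)
qed

lemma lv_diff: "lv I n F \<Longrightarrow> lv I n G \<Longrightarrow> lv I n (\<lambda>t u. F t u - G t u)"
  using lv_add[of n F "\<lambda>t u. - G t u"] lv_uminus[of n G] by (auto elim: lv_cong[rotated])

lemma lvD_r:
  fixes H :: "real \<Rightarrow> real \<Rightarrow> real"
  assumes "lv I n H"
  shows "\<And>t u. t \<in> I \<Longrightarrow> ((\<lambda>s. H s u) has_real_derivative dT I H t u) (at t within I)"
    "\<And>t u. t \<in> I \<Longrightarrow> ((\<lambda>v. H t v) has_real_derivative dUU H t u) (at u)"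
  using lvD[OF assms] has_real_derivative_iff_has_vector_derivative by auto

lemma lv_inverse:
  fixes F :: "real \<Rightarrow> real \<Rightarrow> real"
  assumes "lv I n F" "\<And>t u. t \<in> I \<Longrightarrow> F t u \<noteq> 0"
  shows "lv I n (\<lambda>t u. inverse (F t u))"
  using assms
proof (induction n arbitrary: F)
  case 0
  show ?case
    by (rule lv_0I[where Dt="\<lambda>t u. - (inverse (F t u) * dT I F t u * inverse (F t u))"
          and Du="\<lambda>t u. - (inverse (F t u) * dUU F t u * inverse (F t u))"])
       (auto simp: has_real_derivative_iff_has_vector_derivative[symmetric] 0(2)
          intro!: DERIV_inverse' lvD_r[OF 0(1)] continuous_on_inverse lvD[OF 0(1)])
next
  case (Suc n)
  note f = lv_SucD[OF Suc.prems(1)]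
  note ih = Suc.IH[OF f(3) Suc.prems(2)]
  show ?case
    by (rule lv_SucI[where Dt="\<lambda>t u. - (inverse (F t u) * dT I F t u * inverse (F t u))"
          and Du="\<lambda>t u. - (inverse (F t u) * dUU F t u * inverse (F t u))"])
       (auto simp: has_real_derivative_iff_has_vector_derivative[symmetric] Suc.prems(2)
          intro!: DERIV_inverse' lvD_r[OF Suc.prems(1)] continuous_on_inverse lvD[OF Suc.prems(1)]
             lv_uminus lv_mult ih f)
qed

lemma lv_comp:
  fixes F :: "real \<Rightarrow> real \<Rightarrow> real" and \<phi> \<phi>' :: "real \<Rightarrow> 'b::real_normed_vector"
  assumes d: "\<And>x. x \<in> S \<Longrightarrow> (\<phi> has_vector_derivative \<phi>' x) (at x)"
    and cl: "\<And>n G. lv I n G \<Longrightarrow> (\<And>t u. t \<in> I \<Longrightarrow> G t u \<in> S) \<Longrightarrow> lv I n (\<lambda>t u. \<phi> (G t u)) \<Longrightarrow> lv I n (\<lambda>t u. \<phi>' (G t u))"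
  shows "lv I n F \<Longrightarrow> (\<And>t u. t \<in> I \<Longrightarrow> F t u \<in> S) \<Longrightarrow> lv I n (\<lambda>t u. \<phi> (F t u))"
proof -
  have cphi: "continuous_on S \<phi>"
    using d by (meson continuous_at_imp_continuous_on has_vector_derivative_continuous)
  have aux: "continuous_on (I \<times> UNIV) (\<lambda>p. \<phi> (F (fst p) (snd p)))"
     "\<And>t u. t \<in> I \<Longrightarrow> ((\<lambda>s. \<phi> (F s u)) has_vector_derivative dT I F t u *\<^sub>R \<phi>' (F t u)) (at t within I)"
     "\<And>t u. t \<in> I \<Longrightarrow> ((\<lambda>v. \<phi> (F t v)) has_vector_derivative dUU F t u *\<^sub>R \<phi>' (F t u)) (at u)"
    if lvF: "lv I n F" and inS: "\<And>t u. t \<in> I \<Longrightarrow> F t u \<in> S" for n F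
  proof -
    show "continuous_on (I \<times> UNIV) (\<lambda>p. \<phi> (F (fst p) (snd p)))"
      by (rule continuous_on_compose2[OF cphi lvD(1)[OF lvF]]) (auto intro: inS)
  next
    fix t u assume t: "t \<in> I"
    have "((\<phi> \<circ> (\<lambda>s. F s u)) has_vector_derivative dT I F t u *\<^sub>R \<phi>' (F t u)) (at t within I)"
      by (rule vector_diff_chain_within[OF lvD(2)[OF lvF t]])
         (rule has_vector_derivative_at_within[OF d[OF inS[OF t]]])
    then show "((\<lambda>s. \<phi> (F s u)) has_vector_derivative dT I F t u *\<^sub>R \<phi>' (F t u)) (at t within I)"
      by (simp add: o_def)
    have "((\<phi> \<circ> (\<lambda>v. F t v)) has_vector_derivative dUU F t u *\<^sub>R \<phi>' (F t u)) (at u)"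
      by (rule vector_diff_chain_at[OF lvD(3)[OF lvF t]]) (rule d[OF inS[OF t]])
    then show "((\<lambda>v. \<phi> (F t v)) has_vector_derivative dUU F t u *\<^sub>R \<phi>' (F t u)) (at u)"
      by (simp add: o_def)
  qed
  show "lv I n F \<Longrightarrow> (\<And>t u. t \<in> I \<Longrightarrow> F t u \<in> S) \<Longrightarrow> lv I n (\<lambda>t u. \<phi> (F t u))"
  proof (induction n arbitrary: F)
    case 0
    show ?case by (rule lv_0I[OF aux[OF 0(1)]]) (use 0 in auto)
  next
    case (Suc n)
    note f = lv_SucD[OF Suc.prems(1)]
    have ih: "lv I n (\<lambda>t u. \<phi>' (F t u))"
      by (rule cl[OF f(3) Suc.prems(2) Suc.IH[OF f(3)]]) (use Suc.prems(2) in auto)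
    show ?case
      by (rule lv_SucI[OF aux[OF Suc.prems(1)]]) (use Suc.prems(2) f ih in \<open>auto intro!: lv_scaleR\<close>)
  qed
qed

lemma lv_sqrt:
  fixes F :: "real \<Rightarrow> real \<Rightarrow> real"
  assumes "lv I n F" "\<And>t u. t \<in> I \<Longrightarrow> F t u > 0"
  shows "lv I n (\<lambda>t u. sqrt (F t u))"
proof -
  have d: "(sqrt has_vector_derivative inverse (sqrt x) / 2) (at x)" if "x \<in> {0<..}" for x
    using that by (auto simp: has_real_derivative_iff_has_vector_derivative[symmetric] intro!: DERIV_real_sqrt)
  have cl: "lv I m (\<lambda>t u. inverse (sqrt (G t u)) / 2)"
    if "lv I m G" "\<And>t u. t \<in> I \<Longrightarrow> G t u \<in> {0<..}" "lv I m (\<lambda>t u. sqrt (G t u))" for m G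
  proof -
    have "lv I m (\<lambda>t u. inverse (sqrt (G t u)) * (1/2))"
    proof (rule lv_mult[OF lv_inverse[OF that(3)] lv_const])
      fix t u assume "t \<in> I"
      then have "G t u > 0" using that(2) by auto
      then show "sqrt (G t u) \<noteq> 0" by simp
    qed
    then show ?thesis by (rule lv_cong[rotated]) simp
  qed
  show ?thesis
    by (rule lv_comp[of "{0<..}" sqrt "\<lambda>x. inverse (sqrt x) / 2", OF d cl assms(1)]) (use assms(2) in auto)
qed

lemma lv_cis:
  fixes F :: "real \<Rightarrow> real \<Rightarrow> real"
  assumes "lv I n F"
  shows "lv I n (\<lambda>t u. cis (F t u))"
proof -
  have d: "(cis has_vector_derivative \<i> * cis x) (at x)" if "x \<in> UNIV" for x
    unfolding has_vector_derivative_def using has_derivative_cis[OF has_derivative_ident, of x UNIV] by simp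
  have cl: "lv I m (\<lambda>t u. \<i> * cis (G t u))"
    if "lv I m G" "\<And>t u. t \<in> I \<Longrightarrow> G t u \<in> UNIV" "lv I m (\<lambda>t u. cis (G t u))" for m G
    by (rule lv_mult[OF lv_const that(3)])
  show ?thesis
    by (rule lv_comp[of UNIV cis "\<lambda>x. \<i> * cis x", OF d cl assms(1)]) auto
qed

lemma lv_cos:
  fixes F :: "real \<Rightarrow> real \<Rightarrow> real"
  assumes "lv I n F"
  shows "lv I n (\<lambda>t u. cos (F t u))"
  using lv_inner[OF lv_cis[OF assms] lv_const[of n 1]] by (rule lv_cong[rotated]) (simp add: inner_complex_def)

lemma lv_sin:
  fixes F :: "real \<Rightarrow> real \<Rightarrow> real"
  assumes "lv I n F"
  shows "lv I n (\<lambda>t u. sin (F t u))"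
  using lv_inner[OF lv_cis[OF assms] lv_const[of n "\<i>"]] by (rule lv_cong[rotated]) (simp add: inner_complex_def)

lemma lv_norm:
  assumes "lv I n F" "\<And>t u. t \<in> I \<Longrightarrow> F t u \<noteq> 0"
  shows "lv I n (\<lambda>t u. norm (F t u :: 'a::real_inner))"
  using lv_sqrt[OF lv_inner[OF assms(1) assms(1)]] assms(2) by (auto elim!: lv_cong[rotated] simp: norm_eq_sqrt_inner)

end

context tI begin

abbreviation sm :: "(real \<Rightarrow> real \<Rightarrow> 'a::real_normed_vector) \<Rightarrow> bool" where
  "sm F \<equiv> smooth_tu I F"

lemma smD:
  assumes "sm H"
  shows "continuous_on (I \<times> UNIV) (\<lambda>p. H (fst p) (snd p))"
    "\<And>t u. t \<in> I \<Longrightarrow> ((\<lambda>s. H s u) has_vector_derivative dT I H t u) (at t within I)"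
    "\<And>t u. t \<in> I \<Longrightarrow> ((\<lambda>v. H t v) has_vector_derivative dUU H t u) (at u)"
  using assms lvD unfolding smooth_lv by blast+

lemma sm_dT: "sm F \<Longrightarrow> sm (dT I F)"
  unfolding smooth_lv using lv_SucD by blast
lemma sm_dUU: "sm F \<Longrightarrow> sm (dUU F)"
  unfolding smooth_lv using lv_SucD by blast
lemma sm_cong: "sm F \<Longrightarrow> (\<And>t u. t \<in> I \<Longrightarrow> F t u = G t u) \<Longrightarrow> sm G"
  unfolding smooth_lv using lv_cong by blast
lemma sm_const: "sm (\<lambda>t u. c)"
  unfolding smooth_lv using lv_const by blast
lemma sm_add: "sm F \<Longrightarrow> sm G \<Longrightarrow> sm (\<lambda>t u. F t u + G t u)"
  unfolding smooth_lv using lv_add by blast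
lemma sm_diff: "sm F \<Longrightarrow> sm G \<Longrightarrow> sm (\<lambda>t u. F t u - G t u)"
  unfolding smooth_lv using lv_diff by blast
lemma sm_uminus: "sm F \<Longrightarrow> sm (\<lambda>t u. - F t u)"
  unfolding smooth_lv using lv_uminus by blast
lemma sm_mult: "sm F \<Longrightarrow> sm G \<Longrightarrow> sm (\<lambda>t u. F t u * G t u :: 'a::real_normed_algebra)"
  unfolding smooth_lv using lv_mult by blast
lemma sm_scaleR: "sm F \<Longrightarrow> sm G \<Longrightarrow> sm (\<lambda>t u. F t u *\<^sub>R G t u)"
  unfolding smooth_lv using lv_scaleR by blast
lemma sm_inner: "sm F \<Longrightarrow> sm G \<Longrightarrow> sm (\<lambda>t u. F t u \<bullet> G t u)"
  unfolding smooth_lv using lv_inner by blast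
lemma sm_cross: "sm F \<Longrightarrow> sm G \<Longrightarrow> sm (\<lambda>t u. cross3 (F t u) (G t u))"
  unfolding smooth_lv using lv_cross by blast
lemma sm_inverse: "sm F \<Longrightarrow> (\<And>t u. t \<in> I \<Longrightarrow> F t u \<noteq> 0) \<Longrightarrow> sm (\<lambda>t u. inverse (F t u :: real))"
  unfolding smooth_lv using lv_inverse by blast
lemma sm_sqrt: "sm F \<Longrightarrow> (\<And>t u. t \<in> I \<Longrightarrow> F t u > 0) \<Longrightarrow> sm (\<lambda>t u. sqrt (F t u))"
  unfolding smooth_lv using lv_sqrt by blast
lemma sm_cos: "sm F \<Longrightarrow> sm (\<lambda>t u. cos (F t u :: real))"
  unfolding smooth_lv using lv_cos by blast
lemma sm_sin: "sm F \<Longrightarrow> sm (\<lambda>t u. sin (F t u :: real))"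
  unfolding smooth_lv using lv_sin by blast
lemma sm_norm: "sm F \<Longrightarrow> (\<And>t u. t \<in> I \<Longrightarrow> F t u \<noteq> 0) \<Longrightarrow> sm (\<lambda>t u. norm (F t u :: 'a::real_inner))"
  unfolding smooth_lv using lv_norm by blast

lemma clairaut:
  fixes F :: "real \<Rightarrow> real \<Rightarrow> 'a::euclidean_space"
  assumes sF: "sm F" and t0: "t0 \<in> I"
  shows "dT I (dUU F) t0 u0 = dUU (dT I F) t0 u0"
proof -
  define G where "G = dUU F"
  define Gt where "Gt = dT I G"
  have sG: "sm G" unfolding G_def by (rule sm_dUU[OF sF])
  have sGt: "sm Gt" unfolding Gt_def by (rule sm_dT[OF sG])
  define a where "a = u0 - 1"
  define b where "b = u0 + 1"
  have contG: "continuous_on S (G t)" if "t \<in> I" for t S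
  proof -
    have "continuous_on S (\<lambda>v. G (fst (t, v)) (snd (t, v)))"
      by (rule continuous_on_compose2[OF smD(1)[OF sG]]) (auto intro!: continuous_intros simp: that)
    then show ?thesis by simp
  qed
  have contGt: "continuous_on S (Gt t)" if "t \<in> I" for t S
  proof -
    have "continuous_on S (\<lambda>v. Gt (fst (t, v)) (snd (t, v)))"
      by (rule continuous_on_compose2[OF smD(1)[OF sGt]]) (auto intro!: continuous_intros simp: that)
    then show ?thesis by simp
  qed
  have ftc: "F t u = F t a + integral {a..u} (G t)" if t: "t \<in> I" and u: "u \<in> {a..b}" for t u
  proof -
    have "(G t has_integral (F t u - F t a)) {a..u}"
    proof (rule fundamental_theorem_of_calculus)
      show "a \<le> u" using u by auto
      show "(F t has_vector_derivative G t x) (at x within {a..u})" for x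
        using smD(3)[OF sF t, of x] unfolding G_def
        by (auto intro: has_vector_derivative_at_within)
    qed
    then show ?thesis by (simp add: integral_unique)
  qed
  have lb: "((\<lambda>t. integral {a..u} (G t)) has_vector_derivative integral {a..u} (Gt t0)) (at t0 within I)" for u
  proof -
    have "((\<lambda>t. integral (cbox a u) (G t)) has_vector_derivative integral (cbox a u) (Gt t0)) (at t0 within I)"
    proof (rule leibniz_rule_vector_derivative[OF _ _ _ t0 cvx])
      show "((\<lambda>x. G x v) has_vector_derivative Gt x v) (at x within I)" if "x \<in> I" for x v
        using smD(2)[OF sG that] unfolding Gt_def .
      show "G x integrable_on cbox a u" if "x \<in> I" for x
        using contG[OF that, of "cbox a u"] by (rule integrable_continuous)
      show "continuous_on (I \<times> cbox a u) (\<lambda>(x, v). Gt x v)"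
        using continuous_on_subset[OF smD(1)[OF sGt], of "I \<times> cbox a u"] by (auto simp: case_prod_beta)
    qed
    then show ?thesis by simp
  qed
  have eqT: "dT I F t0 u = dT I F t0 a + integral {a..u} (Gt t0)" if u: "u \<in> {a..b}" for u
  proof -
    have "((\<lambda>t. F t a + integral {a..u} (G t)) has_vector_derivative dT I F t0 a + integral {a..u} (Gt t0)) (at t0 within I)"
      by (intro derivative_intros smD(2)[OF sF t0] lb)
    then have "((\<lambda>t. F t u) has_vector_derivative dT I F t0 a + integral {a..u} (Gt t0)) (at t0 within I)"
      by (rule has_vector_derivative_transform[OF t0, rotated]) (rule ftc[OF _ u])
    then show ?thesis by (rule dT_eqI[OF t0])
  qed
  have "((\<lambda>u. dT I F t0 a + integral {a..u} (Gt t0)) has_vector_derivative Gt t0 u0) (at u0 within {a..b})"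
  proof -
    have "((\<lambda>u. integral {a..u} (Gt t0)) has_vector_derivative Gt t0 u0) (at u0 within {a..b})"
      by (rule integral_has_vector_derivative[OF contGt[OF t0]]) (auto simp: a_def b_def)
    from has_vector_derivative_add[OF has_vector_derivative_const this] show ?thesis by simp
  qed
  moreover have "at u0 within {a..b} = at u0"
    by (rule at_within_interior) (auto simp: a_def b_def)
  ultimately have "((\<lambda>u. dT I F t0 a + integral {a..u} (Gt t0)) has_vector_derivative Gt t0 u0) (at u0)"
    by simp
  then have "((\<lambda>v. dT I F t0 v) has_vector_derivative Gt t0 u0) (at u0)"
  proof (rule has_vector_derivative_transform_within_open[where S="{a<..<b}"])
    show "u0 \<in> {a<..<b}" by (auto simp: a_def b_def)
    fix y assume y: "y \<in> {a<..<b}"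
    then have "y \<in> {a..b}" by auto
    from eqT[OF this] show "dT I F t0 a + integral {a..y} (Gt t0) = dT I F t0 y" by simp
  qed simp
  moreover have "((\<lambda>v. dT I F t0 v) has_vector_derivative dUU (dT I F) t0 u0) (at u0)"
    by (rule smD(3)[OF sm_dT[OF sF] t0])
  ultimately show ?thesis unfolding Gt_def G_def using vector_derivative_unique_at by metis
qed

end

locale flowL = tI +
  fixes \<gamma> :: "real \<Rightarrow> real \<Rightarrow> real^3" and \<theta> :: "real \<Rightarrow> real \<Rightarrow> real"
  assumes s\<gamma>: "smooth_tu I \<gamma>" and s\<theta>: "smooth_tu I \<theta>"
    and reg: "\<And>t u. t \<in> I \<Longrightarrow> spd (\<gamma> t) u > 0"
    and kpos: "\<And>t u. t \<in> I \<Longrightarrow> curv (\<gamma> t) u > 0"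
    and p2nz: "\<And>t u. t \<in> I \<Longrightarrow> psi2 (\<gamma> t) (\<theta> t) u \<noteq> 0"
    and flow_g: "\<And>t u. t \<in> I \<Longrightarrow>
          ((\<lambda>s. \<gamma> s u) has_vector_derivative (curv (\<gamma> t) u *\<^sub>R nu (\<gamma> t) (\<theta> t) u)) (at t within I)"
    and flow_th: "\<And>t u. t \<in> I \<Longrightarrow>
          ((\<lambda>s. \<theta> s u) has_vector_derivative upsilon0 (\<gamma> t) (\<theta> t) u) (at t within I)"
begin

definition "Gu = dUU \<gamma>"
definition "Sp t u = spd (\<gamma> t) u"
definition "Tg t u = tang (\<gamma> t) u"
definition "K t u = curv (\<gamma> t) u"
definition "Nn t u = nrm (\<gamma> t) u"
definition "Bn t u = binrm (\<gamma> t) u"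
definition "Tau t u = tors (\<gamma> t) u"
definition "Nu t u = nu (\<gamma> t) (\<theta> t) u"
definition "P1 t u = psi1 (\<gamma> t) (\<theta> t) u"
definition "P2 t u = psi2 (\<gamma> t) (\<theta> t) u"
definition "P3 t u = psi3 (\<gamma> t) (\<theta> t) u"
definition "Ks t u = dS (\<gamma> t) (curv (\<gamma> t)) u"

lemma dU_dUU: "dU (\<lambda>v. H t v) u = dUU H t u"
  by (simp add: dU_def dUU_def)

lemma dS_eq: "dS (\<gamma> t) (\<lambda>v. H t v) u = (1 / Sp t u) *\<^sub>R dUU H t u"
  by (simp add: dS_def dU_dUU Sp_def)

lemma Sp_eq: "Sp t u = norm (Gu t u)"
  by (simp add: Sp_def spd_def Gu_def dU_def dUU_def)
lemma Tg_eq: "Tg t u = (1 / Sp t u) *\<^sub>R Gu t u"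
  by (simp add: Tg_def tang_def Sp_def Gu_def dU_def dUU_def)
lemma K_eq: "K t u = norm ((1 / Sp t u) *\<^sub>R dUU Tg t u)"
  using dS_eq[of t Tg u] by (simp add: K_def curv_def Tg_def[abs_def])
lemma Nn_eq: "Nn t u = (1 / K t u) *\<^sub>R ((1 / Sp t u) *\<^sub>R dUU Tg t u)"
  using dS_eq[of t Tg u] by (simp add: K_def Nn_def nrm_def Tg_def[abs_def])
lemma Bn_eq: "Bn t u = cross3 (Tg t u) (Nn t u)"
  by (simp add: Bn_def binrm_def Tg_def Nn_def)
lemma Tau_eq: "Tau t u = ((1 / Sp t u) *\<^sub>R dUU Nn t u) \<bullet> Bn t u"
  using dS_eq[of t Nn u] by (simp add: Tau_def tors_def Nn_def[abs_def] Bn_def)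
lemma Nu_eq: "Nu t u = cos (\<theta> t u) *\<^sub>R Nn t u + sin (\<theta> t u) *\<^sub>R Bn t u"
  by (simp add: Nu_def nu_def Nn_def Bn_def)
lemma P1_eq: "P1 t u = K t u * cos (\<theta> t u)"
  by (simp add: P1_def psi1_def K_def)
lemma P2_eq: "P2 t u = K t u * sin (\<theta> t u)"
  by (simp add: P2_def psi2_def K_def)
lemma P3_eq: "P3 t u = Tau t u + (1 / Sp t u) * dUU \<theta> t u"
  using dS_eq[of t \<theta> u] by (simp add: P3_def psi3_def Tau_def)
lemma Ks_eq: "Ks t u = (1 / Sp t u) * dUU K t u"
  using dS_eq[of t K u] by (simp add: Ks_def K_def[abs_def])

lemma Sp_pos: "t \<in> I \<Longrightarrow> Sp t u > 0" using reg by (simp add: Sp_def)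
lemma K_pos: "t \<in> I \<Longrightarrow> K t u > 0" using kpos by (simp add: K_def)
lemma Sp_nz: "t \<in> I \<Longrightarrow> Sp t u \<noteq> 0" using Sp_pos[of t u] by simp
lemma K_nz: "t \<in> I \<Longrightarrow> K t u \<noteq> 0" using K_pos[of t u] by simp
lemma P2_nz: "t \<in> I \<Longrightarrow> P2 t u \<noteq> 0" using p2nz by (simp add: P2_def)
lemma sin_nz: "t \<in> I \<Longrightarrow> sin (\<theta> t u) \<noteq> 0" using P2_nz by (simp add: P2_eq)

lemma sm_Gu: "sm Gu" unfolding Gu_def by (rule sm_dUU[OF s\<gamma>])
lemma sm_Sp: "sm Sp"
proof -
  have "sm (\<lambda>t u. norm (Gu t u))"
    by (rule sm_norm[OF sm_Gu]) (use Sp_pos Sp_eq in force)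
  then show ?thesis by (rule sm_cong) (simp add: Sp_eq)
qed
lemma sm_iSp: "sm (\<lambda>t u. 1 / Sp t u)"
proof -
  have "sm (\<lambda>t u. inverse (Sp t u))" by (rule sm_inverse[OF sm_Sp]) (rule Sp_nz)
  then show ?thesis by (rule sm_cong) (simp add: divide_inverse)
qed
lemma sm_Tg: "sm Tg"
  using sm_scaleR[OF sm_iSp sm_Gu] by (rule sm_cong) (simp add: Tg_eq)
lemma sm_K: "sm K"
proof -
  have "sm (\<lambda>t u. norm ((1 / Sp t u) *\<^sub>R dUU Tg t u))"
    by (rule sm_norm[OF sm_scaleR[OF sm_iSp sm_dUU[OF sm_Tg]]]) (metis K_pos K_eq norm_zero less_irrefl)
  then show ?thesis by (rule sm_cong) (simp add: K_eq)
qed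
lemma sm_iK: "sm (\<lambda>t u. 1 / K t u)"
proof -
  have "sm (\<lambda>t u. inverse (K t u))" by (rule sm_inverse[OF sm_K]) (rule K_nz)
  then show ?thesis by (rule sm_cong) (simp add: divide_inverse)
qed
lemma sm_Nn: "sm Nn"
  using sm_scaleR[OF sm_iK sm_scaleR[OF sm_iSp sm_dUU[OF sm_Tg]]] by (rule sm_cong) (simp add: Nn_eq)
lemma sm_Bn: "sm Bn"
  using sm_cross[OF sm_Tg sm_Nn] by (rule sm_cong) (simp add: Bn_eq)
lemma sm_Tau: "sm Tau"
  using sm_inner[OF sm_scaleR[OF sm_iSp sm_dUU[OF sm_Nn]] sm_Bn] by (rule sm_cong) (simp add: Tau_eq)
lemma sm_Nu: "sm Nu"
  using sm_add[OF sm_scaleR[OF sm_cos[OF s\<theta>] sm_Nn] sm_scaleR[OF sm_sin[OF s\<theta>] sm_Bn]]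
  by (rule sm_cong) (simp add: Nu_eq)
lemma sm_P1: "sm P1"
  using sm_mult[OF sm_K sm_cos[OF s\<theta>]] by (rule sm_cong) (simp add: P1_eq)
lemma sm_P3: "sm P3"
  using sm_add[OF sm_Tau sm_mult[OF sm_iSp sm_dUU[OF s\<theta>]]] by (rule sm_cong) (simp add: P3_eq)
lemma sm_Ks: "sm Ks"
  using sm_mult[OF sm_iSp sm_dUU[OF sm_K]] by (rule sm_cong) (simp add: Ks_eq)

end

lemma frame_eq:
  fixes a b v w :: "real^3"
  assumes "a \<bullet> a = 1" "b \<bullet> b = 1" "a \<bullet> b = 0"
    and "v \<bullet> a = w \<bullet> a" "v \<bullet> b = w \<bullet> b" "v \<bullet> cross3 a b = w \<bullet> cross3 a b"
  shows "v = w"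
proof -
  define d where "d = v - w"
  have da: "d \<bullet> a = 0" and db: "d \<bullet> b = 0" and dc: "d \<bullet> cross3 a b = 0"
    using assms by (auto simp: d_def inner_diff_left)
  have "cross3 d (cross3 a b) = 0" using Lagrange[of d a b] da db by (simp add: inner_commute)
  then have "cross3 (cross3 a b) d = 0" using cross_skew by (metis neg_equal_0_iff_equal)
  moreover have "cross3 a b \<bullet> cross3 a b = 1"
    using dot_cross[of a b a b] assms(1-3) by (simp add: inner_commute)
  ultimately have "(norm d)\<^sup>2 = 0"
    using norm_cross_dot[of "cross3 a b" d] dc
    by (simp add: inner_commute power2_norm_eq_inner[symmetric] power_mult_distrib)
  then show ?thesis by (simp add: d_def)
qed

lemma hvd_inner:
  "(f has_vector_derivative f') (at x within s) \<Longrightarrow> (g has_vector_derivative g') (at x within s) \<Longrightarrow>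
   ((\<lambda>x. f x \<bullet> g x) has_vector_derivative (f x \<bullet> g' + f' \<bullet> g x)) (at x within s)"
  by (rule bounded_bilinear.has_vector_derivative[OF bounded_bilinear_inner])
lemma hvd_scaleR:
  "(f has_vector_derivative f') (at x within s) \<Longrightarrow> (g has_vector_derivative g') (at x within s) \<Longrightarrow>
   ((\<lambda>x. f x *\<^sub>R g x) has_vector_derivative (f x *\<^sub>R g' + f' *\<^sub>R g x)) (at x within s)"
  by (rule bounded_bilinear.has_vector_derivative[OF bounded_bilinear_scaleR])
lemma hvd_mult:
  "(f has_vector_derivative f') (at x within s) \<Longrightarrow> (g has_vector_derivative g') (at x within s) \<Longrightarrow>
   ((\<lambda>x. f x * g x :: real) has_vector_derivative (f x * g' + f' * g x)) (at x within s)"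
  by (rule bounded_bilinear.has_vector_derivative[OF bounded_bilinear_mult])
lemma hvd_cos:
  fixes f :: "real \<Rightarrow> real"
  shows "(f has_vector_derivative f') (at x within s) \<Longrightarrow>
   ((\<lambda>x. cos (f x)) has_vector_derivative (- sin (f x) * f')) (at x within s)"
  unfolding has_real_derivative_iff_has_vector_derivative[symmetric]
  by (rule DERIV_cos[THEN DERIV_chain2])
lemma hvd_sin:
  fixes f :: "real \<Rightarrow> real"
  shows "(f has_vector_derivative f') (at x within s) \<Longrightarrow>
   ((\<lambda>x. sin (f x)) has_vector_derivative (cos (f x) * f')) (at x within s)"
  unfolding has_real_derivative_iff_has_vector_derivative[symmetric]
  by (rule DERIV_sin[THEN DERIV_chain2])

context flowL begin

lemma dUU_cong: "(\<And>v. A t v = B t v) \<Longrightarrow> dUU A t u = dUU B t u"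
  by (simp add: dUU_def)

lemma dT_cong: "(\<And>s u. s \<in> I \<Longrightarrow> A s u = B s u) \<Longrightarrow> t \<in> I \<Longrightarrow> dT I A t u = dT I B t u"
  using pder_cong[of I A B t "[True]" u] by simp

lemma dUU_inner_const:
  assumes "sm X" "sm Y" "t \<in> I" "\<And>v. X t v \<bullet> Y t v = c"
  shows "X t u \<bullet> dUU Y t u + dUU X t u \<bullet> Y t u = 0"
proof -
  have "((\<lambda>v. X t v \<bullet> Y t v) has_vector_derivative X t u \<bullet> dUU Y t u + dUU X t u \<bullet> Y t u) (at u)"
    by (rule hvd_inner[OF smD(3)[OF assms(1,3)] smD(3)[OF assms(2,3)]])
  moreover have "(\<lambda>v. X t v \<bullet> Y t v) = (\<lambda>v. c)" using assms(4) by auto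
  ultimately have "((\<lambda>v. c) has_vector_derivative X t u \<bullet> dUU Y t u + dUU X t u \<bullet> Y t u) (at u)" by simp
  moreover have "((\<lambda>v. c) has_vector_derivative 0) (at u)" by (rule has_vector_derivative_const)
  ultimately show ?thesis using vector_derivative_unique_at by blast
qed

lemma dT_inner_const:
  assumes "sm X" "sm Y" "t \<in> I" "\<And>s. s \<in> I \<Longrightarrow> X s u \<bullet> Y s u = c"
  shows "X t u \<bullet> dT I Y t u + dT I X t u \<bullet> Y t u = 0"
proof -
  have "((\<lambda>s. X s u \<bullet> Y s u) has_vector_derivative X t u \<bullet> dT I Y t u + dT I X t u \<bullet> Y t u) (at t within I)"
    by (rule hvd_inner[OF smD(2)[OF assms(1,3)] smD(2)[OF assms(2,3)]])
  then have "((\<lambda>s. c) has_vector_derivative X t u \<bullet> dT I Y t u + dT I X t u \<bullet> Y t u) (at t within I)"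
    by (rule has_vector_derivative_transform[OF assms(3), rotated]) (simp add: assms(4))
  moreover have "((\<lambda>s. c) has_vector_derivative 0) (at t within I)" by (rule has_vector_derivative_const)
  ultimately show ?thesis using vector_derivative_unique_within[OF nb[OF assms(3)]] by blast
qed

lemma Tg_unit: "t \<in> I \<Longrightarrow> Tg t u \<bullet> Tg t u = 1"
  using Sp_pos[of t u] by (simp add: Tg_eq Sp_eq power2_norm_eq_inner[symmetric] field_simps power2_eq_square)

lemma Gu_eq: "t \<in> I \<Longrightarrow> Gu t u = Sp t u *\<^sub>R Tg t u"
  using Sp_pos[of t u] by (simp add: Tg_eq)

lemma dTg: "t \<in> I \<Longrightarrow> dUU Tg t u = (Sp t u * K t u) *\<^sub>R Nn t u"
  using Sp_pos[of t u] K_pos[of t u] by (simp add: Nn_eq)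

lemma Nn_unit: "t \<in> I \<Longrightarrow> Nn t u \<bullet> Nn t u = 1"
proof -
  assume t: "t \<in> I"
  have "norm (Nn t u) = \<bar>1 / K t u\<bar> * norm ((1 / Sp t u) *\<^sub>R dUU Tg t u)"
    unfolding Nn_eq by (rule norm_scaleR)
  also have "\<dots> = \<bar>1 / K t u\<bar> * K t u" by (simp only: K_eq[symmetric])
  also have "\<dots> = 1" using K_pos[OF t, of u] by simp
  finally have "norm (Nn t u) = 1" .
  then show ?thesis by (metis norm_eq_sqrt_inner real_sqrt_eq_1_iff)
qed

lemma TN: "t \<in> I \<Longrightarrow> Tg t u \<bullet> Nn t u = 0"
proof -
  assume t: "t \<in> I"
  have "Tg t u \<bullet> dUU Tg t u + dUU Tg t u \<bullet> Tg t u = 0"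
    by (rule dUU_inner_const[OF sm_Tg sm_Tg t]) (rule Tg_unit[OF t])
  then have "(Sp t u * K t u) * (Tg t u \<bullet> Nn t u) = 0"
    by (auto simp: dTg[OF t] inner_commute)
  then show ?thesis using Sp_pos[OF t, of u] K_pos[OF t, of u] by (auto simp: inner_commute)
qed

lemma Bn_facts:
  assumes t: "t \<in> I"
  shows "Bn t u \<bullet> Tg t u = 0" "Bn t u \<bullet> Nn t u = 0" "Bn t u \<bullet> Bn t u = 1"
    "Tg t u \<bullet> Bn t u = 0" "Nn t u \<bullet> Bn t u = 0" "Nn t u \<bullet> Tg t u = 0"
  using dot_cross_self[of "Tg t u" "Nn t u"] dot_cross[of "Tg t u" "Nn t u" "Tg t u" "Nn t u"]
    Tg_unit[OF t, of u] Nn_unit[OF t, of u] TN[OF t, of u]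
  by (auto simp: Bn_eq inner_commute)

lemmas frame_simps = Tg_unit Nn_unit TN Bn_facts

lemma frame_eqI:
  assumes t: "t \<in> I"
    and "v \<bullet> Tg t u = w \<bullet> Tg t u" "v \<bullet> Nn t u = w \<bullet> Nn t u" "v \<bullet> Bn t u = w \<bullet> Bn t u"
  shows "v = w"
  using frame_eq[of "Tg t u" "Nn t u" v w] assms frame_simps[OF t] by (simp add: Bn_eq)

lemmas isimps = inner_add_left inner_add_right inner_scaleR_left inner_scaleR_right
  inner_minus_left inner_minus_right inner_diff_left inner_diff_right

lemma dNn: "t \<in> I \<Longrightarrow> dUU Nn t u = (- (Sp t u * K t u)) *\<^sub>R Tg t u + (Sp t u * Tau t u) *\<^sub>R Bn t u"
proof -
  assume t: "t \<in> I"
  have a: "Tg t u \<bullet> dUU Nn t u + dUU Tg t u \<bullet> Nn t u = 0"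
    by (rule dUU_inner_const[OF sm_Tg sm_Nn t]) (rule TN[OF t])
  have b: "Nn t u \<bullet> dUU Nn t u + dUU Nn t u \<bullet> Nn t u = 0"
    by (rule dUU_inner_const[OF sm_Nn sm_Nn t]) (rule Nn_unit[OF t])
  have c: "dUU Nn t u \<bullet> Bn t u = Sp t u * Tau t u"
    using Sp_pos[OF t, of u] by (simp add: Tau_eq)
  show ?thesis
    by (rule frame_eqI[where u=u, OF t]) (use a b c in \<open>simp_all add: isimps frame_simps[OF t] dTg[OF t] inner_commute\<close>)
qed

lemma dBn: "t \<in> I \<Longrightarrow> dUU Bn t u = (- (Sp t u * Tau t u)) *\<^sub>R Nn t u"
proof -
  assume t: "t \<in> I"
  have a: "Bn t u \<bullet> dUU Tg t u + dUU Bn t u \<bullet> Tg t u = 0"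
    by (rule dUU_inner_const[OF sm_Bn sm_Tg t]) (rule Bn_facts[OF t])
  have b: "Bn t u \<bullet> dUU Nn t u + dUU Bn t u \<bullet> Nn t u = 0"
    by (rule dUU_inner_const[OF sm_Bn sm_Nn t]) (rule Bn_facts[OF t])
  have c: "Bn t u \<bullet> dUU Bn t u + dUU Bn t u \<bullet> Bn t u = 0"
    by (rule dUU_inner_const[OF sm_Bn sm_Bn t]) (rule Bn_facts[OF t])
  show ?thesis
    by (rule frame_eqI[where u=u, OF t]) (use a b c in \<open>simp_all add: isimps frame_simps[OF t] dTg[OF t] dNn[OF t] inner_commute\<close>)
qed

lemma dNu: "t \<in> I \<Longrightarrow> dUU Nu t u = (cos (\<theta> t u) *\<^sub>R dUU Nn t u + (- sin (\<theta> t u) * dUU \<theta> t u) *\<^sub>R Nn t u)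
   + (sin (\<theta> t u) *\<^sub>R dUU Bn t u + (cos (\<theta> t u) * dUU \<theta> t u) *\<^sub>R Bn t u)"
proof -
  assume t: "t \<in> I"
  have "dUU Nu t u = dUU (\<lambda>t v. cos (\<theta> t v) *\<^sub>R Nn t v + sin (\<theta> t v) *\<^sub>R Bn t v) t u"
    by (rule dUU_cong) (simp add: Nu_eq)
  also have "\<dots> = (cos (\<theta> t u) *\<^sub>R dUU Nn t u + (- sin (\<theta> t u) * dUU \<theta> t u) *\<^sub>R Nn t u)
   + (sin (\<theta> t u) *\<^sub>R dUU Bn t u + (cos (\<theta> t u) * dUU \<theta> t u) *\<^sub>R Bn t u)"
    by (rule dUU_eqI) (intro has_vector_derivative_add hvd_scaleR hvd_cos hvd_sin smD(3)[OF s\<theta> t] smD(3)[OF sm_Nn t] smD(3)[OF sm_Bn t])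
  finally show ?thesis .
qed

lemma dNu_inner:
  assumes t: "t \<in> I"
  shows "dUU Nu t u \<bullet> Tg t u = - Sp t u * K t u * cos (\<theta> t u)"
    "dUU Nu t u \<bullet> Nn t u = - sin (\<theta> t u) * (dUU \<theta> t u + Sp t u * Tau t u)"
    "dUU Nu t u \<bullet> Bn t u = cos (\<theta> t u) * (dUU \<theta> t u + Sp t u * Tau t u)"
  by (simp_all add: dNu[OF t] dNn[OF t] dBn[OF t] isimps frame_simps[OF t] algebra_simps)

lemma Nu_inner:
  assumes t: "t \<in> I"
  shows "Nu t u \<bullet> Tg t u = 0" "Nu t u \<bullet> Nn t u = cos (\<theta> t u)" "Nu t u \<bullet> Bn t u = sin (\<theta> t u)"
    "Tg t u \<bullet> Nu t u = 0" "Nn t u \<bullet> Nu t u = cos (\<theta> t u)" "Bn t u \<bullet> Nu t u = sin (\<theta> t u)"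
  by (simp_all add: Nu_eq isimps frame_simps[OF t])

definition "al t u = Ks t u * cos (\<theta> t u) - K t u * P3 t u * sin (\<theta> t u)"
definition "be t u = Ks t u * sin (\<theta> t u) + K t u * P3 t u * cos (\<theta> t u)"

lemma sm_al: "sm al"
  using sm_diff[OF sm_mult[OF sm_Ks sm_cos[OF s\<theta>]] sm_mult[OF sm_mult[OF sm_K sm_P3] sm_sin[OF s\<theta>]]]
  by (rule sm_cong) (simp add: al_def)
lemma sm_be: "sm be"
  using sm_add[OF sm_mult[OF sm_Ks sm_sin[OF s\<theta>]] sm_mult[OF sm_mult[OF sm_K sm_P3] sm_cos[OF s\<theta>]]]
  by (rule sm_cong) (simp add: be_def)

lemma dTgam: "t \<in> I \<Longrightarrow> dT I \<gamma> t u = K t u *\<^sub>R Nu t u"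
  using dT_eqI[of t \<gamma> u, OF _ flow_g] by (simp add: K_def Nu_def)

lemma dTGu: "t \<in> I \<Longrightarrow> dT I Gu t u = K t u *\<^sub>R dUU Nu t u + dUU K t u *\<^sub>R Nu t u"
proof -
  assume t: "t \<in> I"
  have "dT I Gu t u = dUU (dT I \<gamma>) t u" unfolding Gu_def by (rule clairaut[OF s\<gamma> t])
  also have "\<dots> = dUU (\<lambda>t u. K t u *\<^sub>R Nu t u) t u" by (rule dUU_cong) (simp add: dTgam[OF t])
  also have "\<dots> = K t u *\<^sub>R dUU Nu t u + dUU K t u *\<^sub>R Nu t u"
    by (rule dUU_eqI) (rule hvd_scaleR[OF smD(3)[OF sm_K t] smD(3)[OF sm_Nu t]])
  finally show ?thesis .
qed

lemma dTTg: "t \<in> I \<Longrightarrow> dT I Tg t u = al t u *\<^sub>R Nn t u + be t u *\<^sub>R Bn t u"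
proof -
  assume t: "t \<in> I"
  have e1: "dT I Gu t u = Sp t u *\<^sub>R dT I Tg t u + dT I Sp t u *\<^sub>R Tg t u"
  proof -
    have "dT I Gu t u = dT I (\<lambda>t u. Sp t u *\<^sub>R Tg t u) t u" by (rule dT_cong[OF _ t]) (simp add: Gu_eq)
    also have "\<dots> = Sp t u *\<^sub>R dT I Tg t u + dT I Sp t u *\<^sub>R Tg t u"
      by (rule dT_eqI[OF t]) (rule hvd_scaleR[OF smD(2)[OF sm_Sp t] smD(2)[OF sm_Tg t]])
    finally show ?thesis .
  qed
  have e2: "Tg t u \<bullet> dT I Tg t u + dT I Tg t u \<bullet> Tg t u = 0"
    by (rule dT_inner_const[OF sm_Tg sm_Tg t]) (rule Tg_unit)
  have n1: "Sp t u * (dT I Tg t u \<bullet> Nn t u) = K t u * (- sin (\<theta> t u) * (dUU \<theta> t u + Sp t u * Tau t u)) + dUU K t u * cos (\<theta> t u)"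
  proof -
    have "dT I Gu t u \<bullet> Nn t u = Sp t u * (dT I Tg t u \<bullet> Nn t u)"
      using e1 by (simp add: isimps frame_simps[OF t])
    moreover have "dT I Gu t u \<bullet> Nn t u = K t u * (- sin (\<theta> t u) * (dUU \<theta> t u + Sp t u * Tau t u)) + dUU K t u * cos (\<theta> t u)"
      by (simp add: dTGu[OF t] isimps dNu_inner[OF t] Nu_inner[OF t])
    ultimately show ?thesis by simp
  qed
  have b1: "Sp t u * (dT I Tg t u \<bullet> Bn t u) = K t u * (cos (\<theta> t u) * (dUU \<theta> t u + Sp t u * Tau t u)) + dUU K t u * sin (\<theta> t u)"
  proof -
    have "dT I Gu t u \<bullet> Bn t u = Sp t u * (dT I Tg t u \<bullet> Bn t u)"
      using e1 by (simp add: isimps frame_simps[OF t])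
    moreover have "dT I Gu t u \<bullet> Bn t u = K t u * (cos (\<theta> t u) * (dUU \<theta> t u + Sp t u * Tau t u)) + dUU K t u * sin (\<theta> t u)"
      by (simp add: dTGu[OF t] isimps dNu_inner[OF t] Nu_inner[OF t])
    ultimately show ?thesis by simp
  qed
  have sp: "Sp t u \<noteq> 0" by (rule Sp_nz[OF t])
  show ?thesis
  proof (rule frame_eqI[where u=u, OF t])
    show "dT I Tg t u \<bullet> Tg t u = (al t u *\<^sub>R Nn t u + be t u *\<^sub>R Bn t u) \<bullet> Tg t u"
      using e2 by (simp add: isimps frame_simps[OF t] inner_commute)
    show "dT I Tg t u \<bullet> Nn t u = (al t u *\<^sub>R Nn t u + be t u *\<^sub>R Bn t u) \<bullet> Nn t u"
      using n1 sp by (simp add: isimps frame_simps[OF t] al_def Ks_eq P3_eq field_simps)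
    show "dT I Tg t u \<bullet> Bn t u = (al t u *\<^sub>R Nn t u + be t u *\<^sub>R Bn t u) \<bullet> Bn t u"
      using b1 sp by (simp add: isimps frame_simps[OF t] be_def Ks_eq P3_eq field_simps)
  qed
qed

end

lemma alg0:
  fixes s k T c sn thu Ks Ksu P3 P3u U Ku al be alu beu :: real
  assumes pyth: "sn^2 + c^2 = 1" and T: "T = s * P3 - thu"
    and U: "U = - sn * c * (k * P3u + 2 * s * Ks * P3) - s * k * P3^2 - (Ksu - s * k * P3^2) * sn^2"
    and Ku: "Ku = s * Ks"
    and al: "al = Ks * c - k * P3 * sn" and be: "be = Ks * sn + k * P3 * c"
    and alu: "alu = (Ks * (- sn * thu) + Ksu * c) - (k * P3 * (c * thu) + (k * P3u + Ku * P3) * sn)"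
    and beu: "beu = (Ks * (c * thu) + Ksu * sn) + (k * P3 * (- sn * thu) + (k * P3u + Ku * P3) * c)"
  shows "(al * (T * sn) + alu * c + be * (- (T * c)) + beu * sn) - U - sn * (al * T + beu) = Ksu"
  using pyth unfolding T U Ku al be alu beu by algebra

context flowL begin

lemma dS_P3: "dS (\<gamma> t) (psi3 (\<gamma> t) (\<theta> t)) u = (1 / Sp t u) * dUU P3 t u"
  using dS_eq[of t P3 u] unfolding P3_def[abs_def] by simp
lemma dS_K: "dS (\<gamma> t) (curv (\<gamma> t)) u = Ks t u"
  by (simp add: Ks_def)
lemma dS_Ks: "dS (\<gamma> t) (dS (\<gamma> t) (curv (\<gamma> t))) u = (1 / Sp t u) * dUU Ks t u"
  using dS_eq[of t Ks u] unfolding Ks_def[abs_def] by simp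

lemma dTth: "t \<in> I \<Longrightarrow> dT I \<theta> t u = - (K t u * ((1 / Sp t u) * dUU P3 t u) + 2 * Ks t u * P3 t u) * (1 / (K t u)^2) * P1 t u
     - K t u * inverse (P2 t u) * (P3 t u)^2 - ((1 / Sp t u) * dUU Ks t u - K t u * (P3 t u)^2) * (1 / (K t u)^2) * P2 t u"
  using dT_eqI[of t \<theta> u, OF _ flow_th]
  by (simp add: upsilon0_def dS_P3 dS_K dS_Ks power_int_minus K_def[symmetric] P1_def[symmetric]
        P2_def[symmetric] P3_def[symmetric] divide_inverse)

lemma ups_mult: "t \<in> I \<Longrightarrow> Sp t u * K t u * sin (\<theta> t u) * dT I \<theta> t u =
   - sin (\<theta> t u) * cos (\<theta> t u) * (K t u * dUU P3 t u + 2 * Sp t u * Ks t u * P3 t u) - Sp t u * K t u * (P3 t u)^2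
   - (dUU Ks t u - Sp t u * K t u * (P3 t u)^2) * (sin (\<theta> t u))^2"
  using Sp_nz[of t u] K_nz[of t u] sin_nz[of t u]
  by (simp add: dTth P1_eq P2_eq field_simps power2_eq_square)

lemma dUU_K: "t \<in> I \<Longrightarrow> dUU K t u = Sp t u * Ks t u"
  using Sp_nz[of t u] by (simp add: Ks_eq)

lemma dUU_al: "t \<in> I \<Longrightarrow> dUU al t u = (Ks t u * (- sin (\<theta> t u) * dUU \<theta> t u) + dUU Ks t u * cos (\<theta> t u))
   - (K t u * P3 t u * (cos (\<theta> t u) * dUU \<theta> t u) + (K t u * dUU P3 t u + dUU K t u * P3 t u) * sin (\<theta> t u))"
proof -
  assume t: "t \<in> I"
  have "dUU al t u = dUU (\<lambda>t v. Ks t v * cos (\<theta> t v) - K t v * P3 t v * sin (\<theta> t v)) t u"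
    by (rule dUU_cong) (simp add: al_def)
  also have "\<dots> = (Ks t u * (- sin (\<theta> t u) * dUU \<theta> t u) + dUU Ks t u * cos (\<theta> t u))
   - (K t u * P3 t u * (cos (\<theta> t u) * dUU \<theta> t u) + (K t u * dUU P3 t u + dUU K t u * P3 t u) * sin (\<theta> t u))"
    by (rule dUU_eqI) (intro has_vector_derivative_diff hvd_mult hvd_cos hvd_sin smD(3)[OF s\<theta> t]
          smD(3)[OF sm_Ks t] smD(3)[OF sm_K t] smD(3)[OF sm_P3 t])
  finally show ?thesis .
qed

lemma dUU_be: "t \<in> I \<Longrightarrow> dUU be t u = (Ks t u * (cos (\<theta> t u) * dUU \<theta> t u) + dUU Ks t u * sin (\<theta> t u))
   + (K t u * P3 t u * (- sin (\<theta> t u) * dUU \<theta> t u) + (K t u * dUU P3 t u + dUU K t u * P3 t u) * cos (\<theta> t u))"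
proof -
  assume t: "t \<in> I"
  have "dUU be t u = dUU (\<lambda>t v. Ks t v * sin (\<theta> t v) + K t v * P3 t v * cos (\<theta> t v)) t u"
    by (rule dUU_cong) (simp add: be_def)
  also have "\<dots> = (Ks t u * (cos (\<theta> t u) * dUU \<theta> t u) + dUU Ks t u * sin (\<theta> t u))
   + (K t u * P3 t u * (- sin (\<theta> t u) * dUU \<theta> t u) + (K t u * dUU P3 t u + dUU K t u * P3 t u) * cos (\<theta> t u))"
    by (rule dUU_eqI) (intro has_vector_derivative_add hvd_mult hvd_cos hvd_sin smD(3)[OF s\<theta> t]
          smD(3)[OF sm_Ks t] smD(3)[OF sm_K t] smD(3)[OF sm_P3 t])
  finally show ?thesis .
qed

lemma dTdTg: "t \<in> I \<Longrightarrow> dT I (dUU Tg) t u = (al t u *\<^sub>R dUU Nn t u + dUU al t u *\<^sub>R Nn t u)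
    + (be t u *\<^sub>R dUU Bn t u + dUU be t u *\<^sub>R Bn t u)"
proof -
  assume t: "t \<in> I"
  have "dT I (dUU Tg) t u = dUU (dT I Tg) t u" by (rule clairaut[OF sm_Tg t])
  also have "\<dots> = dUU (\<lambda>t v. al t v *\<^sub>R Nn t v + be t v *\<^sub>R Bn t v) t u"
    by (rule dUU_cong) (simp add: dTTg[OF t])
  also have "\<dots> = (al t u *\<^sub>R dUU Nn t u + dUU al t u *\<^sub>R Nn t u) + (be t u *\<^sub>R dUU Bn t u + dUU be t u *\<^sub>R Bn t u)"
    by (rule dUU_eqI) (intro has_vector_derivative_add hvd_scaleR smD(3)[OF sm_al t] smD(3)[OF sm_be t]
          smD(3)[OF sm_Nn t] smD(3)[OF sm_Bn t])
  finally show ?thesis .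
qed

lemma dTNu: "t \<in> I \<Longrightarrow> dT I Nu t u = (cos (\<theta> t u) *\<^sub>R dT I Nn t u + (- sin (\<theta> t u) * dT I \<theta> t u) *\<^sub>R Nn t u)
   + (sin (\<theta> t u) *\<^sub>R dT I Bn t u + (cos (\<theta> t u) * dT I \<theta> t u) *\<^sub>R Bn t u)"
proof -
  assume t: "t \<in> I"
  have "dT I Nu t u = dT I (\<lambda>t v. cos (\<theta> t v) *\<^sub>R Nn t v + sin (\<theta> t v) *\<^sub>R Bn t v) t u"
    by (rule dT_cong[OF _ t]) (simp add: Nu_eq)
  also have "\<dots> = (cos (\<theta> t u) *\<^sub>R dT I Nn t u + (- sin (\<theta> t u) * dT I \<theta> t u) *\<^sub>R Nn t u)
   + (sin (\<theta> t u) *\<^sub>R dT I Bn t u + (cos (\<theta> t u) * dT I \<theta> t u) *\<^sub>R Bn t u)"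
    by (rule dT_eqI[OF t]) (intro has_vector_derivative_add hvd_scaleR hvd_cos hvd_sin smD(2)[OF s\<theta> t]
          smD(2)[OF sm_Nn t] smD(2)[OF sm_Bn t])
  finally show ?thesis .
qed

lemma dTNn_Bn: "t \<in> I \<Longrightarrow> dT I Nn t u \<bullet> Bn t u = (1 / K t u) * ((1 / Sp t u) * (dT I (dUU Tg) t u \<bullet> Bn t u))"
proof -
  assume t: "t \<in> I"
  have "dT I Nn t u = dT I (\<lambda>t v. (1 / K t v) *\<^sub>R ((1 / Sp t v) *\<^sub>R dUU Tg t v)) t u"
    by (rule dT_cong[OF _ t]) (simp add: Nn_eq)
  also have "\<dots> = (1 / K t u) *\<^sub>R ((1 / Sp t u) *\<^sub>R dT I (dUU Tg) t u + dT I (\<lambda>t u. 1 / Sp t u) t u *\<^sub>R dUU Tg t u)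
      + dT I (\<lambda>t u. 1 / K t u) t u *\<^sub>R ((1 / Sp t u) *\<^sub>R dUU Tg t u)"
    by (rule dT_eqI[OF t]) (intro hvd_scaleR smD(2)[OF sm_iK t] smD(2)[OF sm_iSp t] smD(2)[OF sm_dUU[OF sm_Tg] t])
  finally show ?thesis
    by (simp add: isimps dTg[OF t] frame_simps[OF t])
qed

lemma main_deriv: "t \<in> I \<Longrightarrow> dT I (\<lambda>t u. P1 t u * Sp t u) t u = dUU Ks t u"
proof -
  assume t: "t \<in> I"
  have e1: "dT I (\<lambda>t u. P1 t u * Sp t u) t u = dUU Tg t u \<bullet> dT I Nu t u + dT I (dUU Tg) t u \<bullet> Nu t u"
  proof -
    have "dT I (\<lambda>t u. P1 t u * Sp t u) t u = dT I (\<lambda>t u. dUU Tg t u \<bullet> Nu t u) t u"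
      by (rule dT_cong[OF _ t]) (simp add: dTg Nu_inner P1_eq)
    also have "\<dots> = dUU Tg t u \<bullet> dT I Nu t u + dT I (dUU Tg) t u \<bullet> Nu t u"
      by (rule dT_eqI[OF t]) (intro hvd_inner smD(2)[OF sm_Nu t] smD(2)[OF sm_dUU[OF sm_Tg] t])
    finally show ?thesis .
  qed
  have nn: "Nn t u \<bullet> dT I Nn t u + dT I Nn t u \<bullet> Nn t u = 0"
    by (rule dT_inner_const[OF sm_Nn sm_Nn t]) (rule Nn_unit)
  have nb: "Nn t u \<bullet> dT I Bn t u + dT I Nn t u \<bullet> Bn t u = 0"
    by (rule dT_inner_const[OF sm_Nn sm_Bn t]) (rule Bn_facts)
  define Bv where "Bv = dT I (dUU Tg) t u \<bullet> Bn t u"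
  have e3: "dUU Tg t u \<bullet> dT I Nu t u = - (Sp t u * K t u * sin (\<theta> t u) * dT I \<theta> t u) - sin (\<theta> t u) * Bv"
  proof -
    have "dUU Tg t u \<bullet> dT I Nu t u = Sp t u * K t u * (- sin (\<theta> t u) * dT I \<theta> t u + sin (\<theta> t u) * (Nn t u \<bullet> dT I Bn t u))"
      using nn by (simp add: dTg[OF t] dTNu[OF t] isimps frame_simps[OF t] inner_commute algebra_simps)
    also have "Nn t u \<bullet> dT I Bn t u = - ((1 / K t u) * ((1 / Sp t u) * Bv))"
      using nb dTNn_Bn[OF t] unfolding Bv_def by simp
    finally have X: "dUU Tg t u \<bullet> dT I Nu t u = Sp t u * K t u * (- sin (\<theta> t u) * dT I \<theta> t u + sin (\<theta> t u) * (- ((1 / K t u) * ((1 / Sp t u) * Bv))))" .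
    have c: "Sp t u * K t u * (- sin (\<theta> t u) * dT I \<theta> t u + sin (\<theta> t u) * (- ((1 / K t u) * ((1 / Sp t u) * Bv))))
       = - (Sp t u * K t u * sin (\<theta> t u) * dT I \<theta> t u) - sin (\<theta> t u) * Bv"
      using Sp_nz[OF t, of u] K_nz[OF t, of u] by (simp add: field_simps)
    show ?thesis using X c by simp
  qed
  have e4: "Bv = al t u * (Sp t u * Tau t u) + dUU be t u"
    unfolding Bv_def by (simp add: dTdTg[OF t] dNn[OF t] dBn[OF t] isimps frame_simps[OF t])
  have e5: "dT I (dUU Tg) t u \<bullet> Nu t u = al t u * (Sp t u * Tau t u * sin (\<theta> t u)) + dUU al t u * cos (\<theta> t u)
       + be t u * (- (Sp t u * Tau t u * cos (\<theta> t u))) + dUU be t u * sin (\<theta> t u)"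
    by (simp add: dTdTg[OF t] dNn[OF t] dBn[OF t] isimps frame_simps[OF t] Nu_inner[OF t])
  have T: "Sp t u * Tau t u = Sp t u * P3 t u - dUU \<theta> t u"
    using Sp_nz[OF t, of u] by (simp add: P3_eq field_simps)
  have "dT I (\<lambda>t u. P1 t u * Sp t u) t u =
     (al t u * (Sp t u * Tau t u * sin (\<theta> t u)) + dUU al t u * cos (\<theta> t u)
       + be t u * (- (Sp t u * Tau t u * cos (\<theta> t u))) + dUU be t u * sin (\<theta> t u))
     - (Sp t u * K t u * sin (\<theta> t u) * dT I \<theta> t u) - sin (\<theta> t u) * (al t u * (Sp t u * Tau t u) + dUU be t u)"
    using e1 e3 e4 e5 by simp
  also have "\<dots> = dUU Ks t u"
    by (rule alg0[OF sin_cos_squared_add T ups_mult[OF t] dUU_K[OF t] al_def be_def dUU_al[OF t] dUU_be[OF t]])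
  finally show ?thesis .
qed

end

definition per :: "(real \<Rightarrow> 'a) \<Rightarrow> bool" where "per f \<longleftrightarrow> (\<forall>v. f (v + 2 * pi) = f v)"

lemma per_hvd:
  fixes f :: "real \<Rightarrow> 'a::real_normed_vector"
  assumes p: "\<And>v. f (v + c) = f v" and d: "(f has_vector_derivative D) (at u)"
  shows "(f has_vector_derivative D) (at (u + c))"
proof -
  have g: "((\<lambda>v. v - c) has_vector_derivative 1) (at (u + c))"
    by (auto intro!: derivative_eq_intros)
  have "((f \<circ> (\<lambda>v. v - c)) has_vector_derivative 1 *\<^sub>R D) (at (u + c))"
    by (rule vector_diff_chain_at[OF g]) (simp add: d)
  moreover have "f \<circ> (\<lambda>v. v - c) = f" using p[of "_ - c"] by (auto simp: o_def)
  ultimately show ?thesis by simp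
qed

lemma per_dU: "per f \<Longrightarrow> per (dU (f :: real \<Rightarrow> 'a::real_normed_vector))"
proof -
  assume p: "per f"
  have e: "(f has_vector_derivative D) (at (v + 2 * pi)) \<longleftrightarrow> (f has_vector_derivative D) (at v)" for v D
  proof
    assume "(f has_vector_derivative D) (at (v + 2 * pi))"
    from per_hvd[of f "- 2 * pi", OF _ this] p show "(f has_vector_derivative D) (at v)"
      unfolding per_def by (metis add.commute add_diff_cancel_left' diff_conv_add_uminus diff_diff_eq2 mult_minus_left)
  next
    assume "(f has_vector_derivative D) (at v)"
    from per_hvd[of f "2 * pi", OF _ this] p show "(f has_vector_derivative D) (at (v + 2 * pi))"
      unfolding per_def by blast
  qed
  show ?thesis unfolding per_def dU_def vector_derivative_def using e by simp
qed

lemma per_spd: "per c \<Longrightarrow> per (spd c)"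
  using per_dU[of c] by (simp add: per_def spd_def)
lemma per_dS: "per c \<Longrightarrow> per f \<Longrightarrow> per (dS c f)"
  using per_dU[of c] per_dU[of f] by (simp add: per_def dS_def spd_def)
lemma per_tang: "per c \<Longrightarrow> per (tang c)"
  using per_dU[of c] by (simp add: per_def tang_def spd_def)
lemma per_curv: "per c \<Longrightarrow> per (curv c)"
  using per_dS[OF _ per_tang, of c] by (simp add: per_def curv_def)

lemma nb_Ico:
  assumes "t \<in> {0..<tb}"
  shows "at t within {0..<(tb::real)} \<noteq> bot"
proof -
  have "t islimpt {0..<tb}"
    unfolding islimpt_approachable_real
  proof (intro allI impI)
    fix e :: real assume e: "0 < e"
    let ?x = "t + min e (tb - t) / 2"
    show "\<exists>x'\<in>{0..<tb}. x' \<noteq> t \<and> \<bar>x' - t\<bar> < e"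
      by (rule bexI[of _ ?x]) (use assms e in \<open>auto simp: min_def field_simps\<close>)
  qed
  then show ?thesis using trivial_limit_within by blast
qed

theorem mainTheorem19:
  fixes \<gamma> :: "real \<Rightarrow> real \<Rightarrow> real^3" and \<theta> :: "real \<Rightarrow> real \<Rightarrow> real" and tb :: real
  assumes tb_pos: "0 < tb"
    and smooth_gamma: "smooth_tu {0..<tb} \<gamma>"
    and smooth_theta: "smooth_tu {0..<tb} \<theta>"
    and periodic_gamma: "\<And>t u. t \<in> {0..<tb} \<Longrightarrow> \<gamma> t (u + 2 * pi) = \<gamma> t u"
    and periodic_theta: "\<And>t u. t \<in> {0..<tb} \<Longrightarrow> \<theta> t (u + 2 * pi) = \<theta> t u"
    and regular: "\<And>t u. t \<in> {0..<tb} \<Longrightarrow> spd (\<gamma> t) u > 0"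
    and curv_pos: "\<And>t u. t \<in> {0..<tb} \<Longrightarrow> curv (\<gamma> t) u > 0"
    and psi2_nz: "\<And>t u. t \<in> {0..<tb} \<Longrightarrow> psi2 (\<gamma> t) (\<theta> t) u \<noteq> 0"
    and flow_gamma: "\<And>t u. t \<in> {0..<tb} \<Longrightarrow>
          ((\<lambda>s. \<gamma> s u) has_vector_derivative (curv (\<gamma> t) u *\<^sub>R nu (\<gamma> t) (\<theta> t) u)) (at t within {0..<tb})"
    and flow_theta: "\<And>t u. t \<in> {0..<tb} \<Longrightarrow>
          ((\<lambda>s. \<theta> s u) has_vector_derivative upsilon0 (\<gamma> t) (\<theta> t) u) (at t within {0..<tb})"
  shows "\<exists>C. \<forall>t\<in>{0..<tb}. integral {0..2*pi} (\<lambda>u. psi1 (\<gamma> t) (\<theta> t) u * spd (\<gamma> t) u) = C"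
proof -
  define I where "I = {0..<tb}"
  interpret fl: flowL I \<gamma> \<theta>
    by unfold_locales (use nb_Ico smooth_gamma smooth_theta regular curv_pos psi2_nz flow_gamma flow_theta
        in \<open>auto simp: I_def convex_real_interval\<close>)
  define F where "F = (\<lambda>t u. fl.P1 t u * fl.Sp t u)"
  have sF: "fl.sm F" unfolding F_def by (rule fl.sm_mult[OF fl.sm_P1 fl.sm_Sp])
  have deriv: "((\<lambda>t. integral (cbox 0 (2*pi)) (F t)) has_field_derivative integral (cbox 0 (2*pi)) (dT I F t0)) (at t0 within I)"
    if t0: "t0 \<in> I" for t0
  proof (rule leibniz_rule_field_derivative[OF _ _ _ t0 fl.cvx])
    show "((\<lambda>x. F x u) has_field_derivative dT I F x u) (at x within I)" if "x \<in> I" for x u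
      using fl.smD(2)[OF sF that, of u] by (simp add: has_real_derivative_iff_has_vector_derivative)
    show "F x integrable_on cbox 0 (2 * pi)" if "x \<in> I" for x
    proof -
      have "continuous_on (cbox 0 (2*pi)) (\<lambda>v. F (fst (x, v)) (snd (x, v)))"
        by (rule continuous_on_compose2[OF fl.smD(1)[OF sF]]) (auto intro!: continuous_intros simp: that)
      then have "continuous_on (cbox 0 (2*pi)) (F x)" by simp
      then show ?thesis by (rule integrable_continuous)
    qed
    show "continuous_on (I \<times> cbox 0 (2 * pi)) (\<lambda>(x, t). dT I F x t)"
      using continuous_on_subset[OF fl.smD(1)[OF fl.sm_dT[OF sF]], of "I \<times> cbox 0 (2 * pi)"]
      by (auto simp: case_prod_beta)
  qed
  have zero: "integral (cbox 0 (2*pi)) (dT I F t0) = 0" if t0: "t0 \<in> I" for t0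
  proof -
    have e: "dT I F t0 = dUU fl.Ks t0"
      using fl.main_deriv[OF t0] by (auto simp: F_def)
    have "(dUU fl.Ks t0 has_integral (fl.Ks t0 (2*pi) - fl.Ks t0 0)) {0..2*pi}"
      by (rule fundamental_theorem_of_calculus)
         (auto intro!: has_vector_derivative_at_within fl.smD(3)[OF fl.sm_Ks t0])
    moreover have "fl.Ks t0 (2*pi) = fl.Ks t0 0"
    proof -
      have "per (\<gamma> t0)" using periodic_gamma t0 by (auto simp: per_def I_def)
      then have "per (dS (\<gamma> t0) (curv (\<gamma> t0)))" by (intro per_dS per_curv)
      then show ?thesis unfolding per_def fl.Ks_def by (metis add_0)
    qed
    ultimately show ?thesis unfolding e by (simp add: integral_unique)
  qed
  have "\<exists>C. \<forall>t\<in>I. integral (cbox 0 (2*pi)) (F t) = C"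
    by (rule has_field_derivative_zero_constant[OF fl.cvx]) (use deriv zero in fastforce)
  then show ?thesis
    by (simp add: I_def F_def fl.P1_def fl.Sp_def)
qed

end
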